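(* Let $a,b$ be complex numbers such that $j^2-aj-b^2\neq 0$ for every positive integer $j$. Then $$\sum_{k=1}^{\infty}\frac{1}{k^2-ak-b^2}=\sum_{k=1}^{\infty}\frac{3k-a}{k\binom{2k}{k}}\cdot\frac{\prod_{j=1}^{k-1}(j^2-a^2-4b^2)}{\prod_{j=1}^{k}(j^2-aj-b^2)}.$$
   Context: The left-hand side equals the generating function $\sum_{r\ge0}\sum_{s\ge0}\binom{r+s}{r}\zeta(2+r+2s)a^rb^{2s}$ for small $|a|,|b|$. *)

theory Defs
  imports "HOL-Analysis.Analysis"
begin

end

theory Submission imports Defs begin

context fixes a b :: complex
  assumes nz0: "\<And>j::nat. j \<ge> 1 \<Longrightarrow> (of_nat j)^2 - a * of_nat j - b^2 \<noteq> 0"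
begin
definition Q :: "nat \<Rightarrow> complex" where "Q j = (of_nat j)^2 - a * of_nat j - b^2"
definition Pp :: "nat \<Rightarrow> complex" where "Pp n = (\<Prod>j=1..n. (of_nat j)^2 - a^2 - 4 * b^2)"
definition cc :: "nat \<Rightarrow> complex" where "cc n = Pp n / of_nat ((2*n) choose n)"
definition H :: "nat \<Rightarrow> nat \<Rightarrow> complex" where "H n k = 1 / (\<Prod>i\<le>n. Q (k+i))"
definition F :: "nat \<Rightarrow> nat \<Rightarrow> complex" where "F n k = cc n * H n k"
definition G :: "nat \<Rightarrow> nat \<Rightarrow> complex" where
  "G n k = cc n / (2 * of_nat n + 1) * (of_nat k + (3 * of_nat (n+1) - a - 2) / 2) * H n k"

lemma binom_step: "(n+1) * ((2*(n+1)) choose (n+1)) = 2 * (2*n+1) * ((2*n) choose n)"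
proof -
  have e1: "(2*(n+1)) choose (n+1) = 2 * ((2*n+1) choose (n+1))"
    using binomial_symmetric[of "n+1" "2*n+1"] by (simp add: numeral_2_eq_2)
  have e2: "(n+1) * ((2*n+1) choose (n+1)) = (2*n+1) * ((2*n) choose n)"
    using Suc_times_binomial[of n "2*n"] by simp
  have "(n+1) * ((2*(n+1)) choose (n+1)) = 2 * ((n+1) * ((2*n+1) choose (n+1)))"
    unfolding e1 by (rule mult.left_commute)
  also have "\<dots> = 2 * ((2*n+1) * ((2*n) choose n))" unfolding e2 ..
  finally show ?thesis by (simp only: mult.assoc)
qed

lemma cc_Suc: "cc (Suc n) = cc n * of_nat (n+1) * ((of_nat (n+1))^2 - a^2 - 4 * b^2) / (2 * (2 * of_nat n + 1))"
proof -
  have P: "Pp (Suc n) = Pp n * ((of_nat (n+1))^2 - a^2 - 4 * b^2)"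
    unfolding Pp_def by (simp add: prod.nat_ivl_Suc' mult.commute)
  have B0: "(of_nat (n+1) * of_nat ((2*(n+1)) choose (n+1)) :: complex) = 2 * (2 * of_nat n+1) * of_nat ((2*n) choose n)"
  proof -
    have "(of_nat ((n+1) * ((2*(n+1)) choose (n+1))) :: complex) = of_nat (2 * (2*n+1) * ((2*n) choose n))"
      by (simp only: binom_step)
    then show ?thesis by (simp only: of_nat_mult of_nat_add of_nat_1 of_nat_numeral)
  qed
  define C where "C = (of_nat ((2*n) choose n) :: complex)"
  define C1 where "C1 = (of_nat ((2*(n+1)) choose (n+1)) :: complex)"
  define m where "m = (of_nat (n+1) :: complex)"
  have m2: "2 * (2 * of_nat n + 1) = (2 * m - 1) * (2::complex)" unfolding m_def by (simp add: algebra_simps)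
  have nz: "C \<noteq> 0" "C1 \<noteq> 0" "m \<noteq> 0" unfolding C_def C1_def m_def by (simp_all only: of_nat_eq_0_iff binomial_eq_0_iff) simp_all
  have nz2: "2 * m - 1 \<noteq> 0"
  proof
    assume "2 * m - 1 = 0"
    then have "(of_nat (2*n+1) :: complex) = 0" unfolding m_def by (simp add: algebra_simps)
    then show False by (simp only: of_nat_eq_0_iff)
  qed
  have B: "m * C1 = (2 * m - 1) * 2 * C" using B0 unfolding C_def[symmetric] C1_def[symmetric] m_def[symmetric] m2 .
  have "cc (Suc n) = Pp n * ((of_nat (n+1))^2 - a^2 - 4 * b^2) / C1" unfolding cc_def P C1_def by simp
  also have "\<dots> = cc n * m * ((of_nat (n+1))^2 - a^2 - 4 * b^2) / ((2 * m - 1) * 2)"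
    unfolding cc_def C_def[symmetric] using nz nz2 B
    by (simp add: divide_simps)
  finally show ?thesis unfolding m_def m2[folded m_def] by simp
qed

lemma P1:
  fixes x m :: complex
  shows "(2*m-1)*((x+m)^2 - a*(x+m) - b^2) - m * (m^2 - a^2 - 4 * b^2) / 2
    = (x + (3 * m - a - 2) / 2) * ((x+m)^2 - a*(x+m) - b^2)
      - (x + 1 + (3 * m - a - 2) / 2) * (x^2 - a*x - b^2)"
  by (simp add: field_simps power2_eq_square power3_eq_cube)
lemma poly_id:
  fixes c x m :: complex
  assumes "2 * m - 1 \<noteq> 0"
  shows "c * ((x+m)^2 - a*(x+m) - b^2) - c * m * (m^2 - a^2 - 4 * b^2) / (2 * (2 * m - 1))
    = c / (2 * m - 1) * (x + (3 * m - a - 2) / 2) * ((x+m)^2 - a*(x+m) - b^2)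
      - c / (2 * m - 1) * (x + 1 + (3 * m - a - 2) / 2) * (x^2 - a*x - b^2)"
proof -
  have "c * ((x+m)^2 - a*(x+m) - b^2) - c * m * (m^2 - a^2 - 4 * b^2) / (2 * (2 * m - 1))
     = c / (2*m-1) * ((2*m-1)*((x+m)^2 - a*(x+m) - b^2) - m * (m^2 - a^2 - 4 * b^2) / 2)"
    using assms by (simp add: field_simps)
  also have "\<dots> = c / (2*m-1) * ((x + (3 * m - a - 2) / 2) * ((x+m)^2 - a*(x+m) - b^2)
      - (x + 1 + (3 * m - a - 2) / 2) * (x^2 - a*x - b^2))" by (simp only: P1)
  finally show ?thesis by (simp only: right_diff_distrib mult.assoc)
qed
lemma tele:
  assumes nzQ: "\<And>j. j \<ge> 1 \<Longrightarrow> Q j \<noteq> 0" and k: "k \<ge> 1"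
  shows "F n k - F (Suc n) k = G n k - G n (Suc k)"
proof -
  define D where "D = (\<Prod>i\<le>n. Q (k+i))"
  define D' where "D' = (\<Prod>i\<le>n. Q (Suc k+i))"
  define E where "E = (\<Prod>i\<le>Suc n. Q (k+i))"
  have E1: "E = D * Q (k + Suc n)" unfolding E_def D_def by simp
  have E2: "E = Q k * D'" unfolding E_def D'_def by (subst prod.atMost_Suc_shift) simp
  have nzD: "D \<noteq> 0" unfolding D_def using nzQ k by (simp add: prod_zero_iff)
  have nzD': "D' \<noteq> 0" unfolding D'_def using nzQ k by (simp add: prod_zero_iff)
  have nzk: "Q k \<noteq> 0" using nzQ k by simp
  have nzm: "Q (k + Suc n) \<noteq> 0" using nzQ k by simp
  define m where "m = (of_nat (n+1) :: complex)"
  define x where "x = (of_nat k :: complex)"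
  have nz2: "2 * m - 1 \<noteq> 0"
  proof
    assume "2 * m - 1 = 0"
    then have "(of_nat (2*n+1) :: complex) = 0" unfolding m_def by (simp add: algebra_simps)
    then show False by (simp only: of_nat_eq_0_iff)
  qed
  have Qm: "Q (k + Suc n) = (x+m)^2 - a*(x+m) - b^2" unfolding Q_def x_def m_def by (simp add: algebra_simps)
  have Qk: "Q k = x^2 - a*x - b^2" unfolding Q_def x_def by simp
  have cS: "cc (Suc n) = cc n * m * (m^2 - a^2 - 4 * b^2) / (2 * (2 * m - 1))"
    unfolding cc_Suc m_def by (simp add: algebra_simps)
  have HS: "H n k = 1 / D" "H (Suc n) k = 1 / E" "H n (Suc k) = 1 / D'"
    unfolding H_def D_def E_def D'_def by simp_all
  have g1: "cc n / (2 * of_nat n + 1) = cc n / (2 * m - 1)" unfolding m_def by (simp add: algebra_simps)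
  have g2: "(of_nat (Suc k) :: complex) = x + 1" unfolding x_def by simp
  have "(F n k - F (Suc n) k) * E = cc n * Q (k + Suc n) - cc (Suc n)"
    unfolding F_def HS E1 using nzD nzm by (simp add: field_simps)
  also have "\<dots> = cc n / (2 * m - 1) * (x + (3 * m - a - 2) / 2) * Q (k + Suc n)
      - cc n / (2 * m - 1) * (x + 1 + (3 * m - a - 2) / 2) * Q k"
    unfolding cS Qm Qk by (rule poly_id[OF nz2])
  also have "\<dots> = (G n k - G n (Suc k)) * E"
  proof -
    define A where "A = cc n / (2 * m - 1)"
    define c3 where "c3 = (3 * m - a - 2) / 2"
    have c3e: "(3 * of_nat (n+1) - a - 2) / 2 = c3" unfolding c3_def m_def ..
    have Gk: "G n k = A * (x + c3) * (1 / D)" unfolding G_def HS g1 c3e A_def x_def ..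
    have Gk1: "G n (Suc k) = A * (x + 1 + c3) * (1 / D')" unfolding G_def HS g1 c3e A_def g2 ..
    have e1: "G n k * E = A * (x + c3) * Q (k + Suc n)" unfolding Gk E1 using nzD by simp
    have e2: "G n (Suc k) * E = A * (x + 1 + c3) * Q k" unfolding Gk1 E2 using nzD' by simp
    show ?thesis unfolding left_diff_distrib e1 e2 A_def c3_def by (simp add: add.assoc)
  qed
  finally show ?thesis using nzD nzm E1 by simp
qed

definition Dn :: real where "Dn = norm (a^2 + 4 * b^2)"
definition M :: nat where "M = nat \<lceil>3 * norm a + 3 * norm (b^2) + 2 * Dn\<rceil> + 2"

lemma M_ge2: "M \<ge> 2" unfolding M_def by simp

lemma Mbound:
  assumes "j \<ge> M"
  shows "norm (Q j) \<ge> 2/3 * (real j ^ 2 + Dn)"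
proof -
  have jM: "real j \<ge> 3 * norm a + 3 * norm (b^2) + 2 * Dn" "real j \<ge> 1"
    using assms unfolding M_def by linarith+
  have tri: "norm (Q j) \<ge> real j ^ 2 - norm a * real j - norm (b^2)"
  proof -
    have eq: "(of_nat j :: complex)^2 = Q j + a * of_nat j + b^2" unfolding Q_def by simp
    have "norm (Q j + a * of_nat j + b^2) \<le> norm (Q j + a * of_nat j) + norm (b^2)"
      by (rule norm_triangle_ineq)
    also have "\<dots> \<le> norm (Q j) + norm (a * of_nat j) + norm (b^2)"
      using norm_triangle_ineq[of "Q j" "a * of_nat j"] by simp
    finally have "norm ((of_nat j :: complex)^2) \<le> norm (Q j) + norm (a * of_nat j) + norm (b^2)"
      unfolding eq[symmetric] .
    then show ?thesis by (simp add: norm_mult norm_power)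
  qed
  have n0: "norm a \<ge> 0" "norm (b^2) \<ge> 0" "Dn \<ge> 0" unfolding Dn_def by simp_all
  have "real j * real j \<ge> real j * (3 * norm a + 3 * norm (b^2) + 2 * Dn)"
    using jM by (intro mult_left_mono) auto
  moreover have "real j * (3 * norm (b^2) + 2 * Dn) \<ge> 3 * norm (b^2) + 2 * Dn"
    using mult_right_mono[of 1 "real j" "3 * norm (b^2) + 2 * Dn"] jM n0 by simp
  ultimately have "real j ^ 2 \<ge> 3 * norm a * real j + 3 * norm (b^2) + 2 * Dn"
    by (simp add: power2_eq_square algebra_simps)
  then show ?thesis using tri by simp
qed

lemma prod_bound:
  assumes "k \<ge> M"
  shows "norm (\<Prod>i\<le>n. Q (k+i)) \<ge> 2/3 * real k ^ 2"
proof (induction n)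
  case 0
  have "Dn \<ge> 0" unfolding Dn_def by simp
  then show ?case using Mbound[OF assms] by simp
next
  case (Suc n)
  have j2: "real (k + Suc n) \<ge> 2" using assms M_ge2 by simp
  have "2/3 * (real (k + Suc n) ^ 2 + Dn) \<ge> 1"
  proof -
    have "real (k + Suc n) ^ 2 \<ge> 2^2" using j2 by (intro power_mono) auto
    moreover have "Dn \<ge> 0" unfolding Dn_def by simp
    ultimately show ?thesis by simp
  qed
  then have q1: "norm (Q (k + Suc n)) \<ge> 1" using Mbound[of "k + Suc n"] assms by simp
  have "norm (\<Prod>i\<le>Suc n. Q (k+i)) = norm (\<Prod>i\<le>n. Q (k+i)) * norm (Q (k + Suc n))"
    by (simp add: norm_mult)
  also have "\<dots> \<ge> norm (\<Prod>i\<le>n. Q (k+i)) * 1"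
    using q1 by (intro mult_left_mono) auto
  finally show ?case using Suc by simp
qed

lemma H_bound:
  assumes "k \<ge> M"
  shows "norm (H n k) \<le> 3/2 / real k ^ 2"
proof -
  have kp: "real k ^ 2 > 0" using assms M_ge2 by simp
  have p: "norm (\<Prod>i\<le>n. Q (k+i)) \<ge> 2/3 * real k ^ 2" by (rule prod_bound[OF assms])
  then have pp: "norm (\<Prod>i\<le>n. Q (k+i)) > 0" using kp by linarith
  have "norm (H n k) = 1 / norm (\<Prod>i\<le>n. Q (k+i))" unfolding H_def by (simp add: norm_divide)
  also have "\<dots> \<le> 1 / (2/3 * real k ^ 2)" using p kp pp by (intro divide_left_mono) (auto intro: mult_pos_pos)
  also have "\<dots> = 3/2 / real k ^ 2" by simp
  finally show ?thesis .
qed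

lemma F_ratio:
  assumes "k + Suc n \<ge> M"
  shows "norm (F (Suc n) k) \<le> 3/4 * norm (F n k)"
proof -
  define m where "m = real (n+1)"
  define qq where "qq = norm (Q (k + Suc n))"
  define r where "r = norm (cc n) * norm (H n k)"
  define w where "w = norm ((of_nat (n+1) :: complex)^2 - a^2 - 4 * b^2)"
  have r0: "r \<ge> 0" unfolding r_def by simp
  have m1: "m \<ge> 1" unfolding m_def by simp
  have qb: "qq \<ge> 2/3 * (real (k + Suc n) ^ 2 + Dn)" unfolding qq_def by (rule Mbound[OF assms])
  have "real (k + Suc n) ^ 2 \<ge> m ^ 2" unfolding m_def by (intro power_mono) auto
  moreover have "w \<le> m^2 + Dn"
  proof -
    have "w \<le> norm ((of_nat (n+1) :: complex)^2) + norm (a^2 + 4 * b^2)"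
      unfolding w_def by (metis diff_diff_eq norm_triangle_ineq4)
    then show ?thesis unfolding m_def Dn_def norm_power norm_of_nat by simp
  qed
  ultimately have wq: "w \<le> 3/2 * qq" using qb by (simp add: field_simps)
  have Dn0: "Dn \<ge> 0" unfolding Dn_def by simp
  have "0 < 2/3 * (real (k + Suc n) ^ 2 + Dn)" using Dn0 by (intro mult_pos_pos add_pos_nonneg) auto
  then have qpos: "qq > 0" using qb by linarith
  have H1: "H (Suc n) k = H n k / Q (k + Suc n)" unfolding H_def by simp
  have nc: "norm (cc (Suc n)) = norm (cc n) * m * w / (2 * (2 * m - 1))"
  proof -
    have e: "(2 * (2 * of_nat n + 1) :: complex) = of_nat (2*(2*n+1))" by simp
    have e2: "real (2*(2*n+1)) = 2 * (2 * m - 1)" unfolding m_def by simp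
    show ?thesis unfolding cc_Suc e norm_divide norm_mult norm_of_nat e2 w_def[symmetric] m_def[symmetric] ..
  qed
  have "norm (F (Suc n) k) = r * (m * w / (2 * (2 * m - 1))) / qq"
    unfolding F_def H1 norm_mult norm_divide nc r_def qq_def by simp
  also have "\<dots> \<le> r * (3/4)"
  proof -
    have "m * w / (2 * (2 * m - 1)) \<le> m * (3/2 * qq) / (2 * (2 * m - 1))"
      using wq m1 by (intro divide_right_mono mult_left_mono) auto
    also have "\<dots> \<le> 3/4 * qq"
    proof -
      have "m * (3/2 * qq) \<le> 3/4 * qq * (2 * (2 * m - 1))"
        using mult_right_mono[of 1 m qq] m1 qpos by (simp add: algebra_simps)
      then show ?thesis using m1 by (simp add: divide_simps algebra_simps)
    qed
    finally have X: "m * w / (2 * (2 * m - 1)) \<le> 3/4 * qq" .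
    then have "m * w / (2 * (2 * m - 1)) / qq \<le> 3/4 * qq / qq" using qpos by (intro divide_right_mono) auto
    then have "m * w / (2 * (2 * m - 1)) / qq \<le> 3/4" using qpos by simp
    then have "r * (m * w / (2 * (2 * m - 1)) / qq) \<le> r * (3/4)" using r0 by (rule mult_left_mono)
    then show ?thesis by simp
  qed
  finally show ?thesis unfolding r_def F_def by (simp add: norm_mult)
qed

lemma nzQ: "j \<ge> 1 \<Longrightarrow> Q j \<noteq> 0" unfolding Q_def using nz0 by simp

lemma summable_inv_sq: "summable (\<lambda>k::nat. 1 / real (k+1) ^ 2)"
proof -
  have "summable (\<lambda>k::nat. inverse (real k ^ 2))" by (rule inverse_power_summable) simp
  then have "summable (\<lambda>k::nat. inverse (real (Suc k) ^ 2))" by (subst summable_Suc_iff)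
  then show ?thesis by (simp add: inverse_eq_divide)
qed

lemma F_summable: "summable (\<lambda>k. norm (F n (k+1)))"
proof (rule summable_comparison_test'[where N = M])
  show "summable (\<lambda>k. norm (cc n) * 3/2 * (1 / real (k+1) ^ 2))"
    by (intro summable_mult summable_inv_sq)
  fix k assume "k \<ge> M"
  then have "norm (H n (k+1)) \<le> 3/2 / real (k+1) ^ 2" by (intro H_bound) simp
  then have "norm (cc n) * norm (H n (k+1)) \<le> norm (cc n) * (3/2 / real (k+1) ^ 2)"
    by (intro mult_left_mono) auto
  then show "norm (norm (F n (k+1))) \<le> norm (cc n) * 3/2 * (1 / real (k+1) ^ 2)"
    unfolding F_def by (simp add: norm_mult)
qed

lemma G_lim: "(\<lambda>k. G n (k+1)) \<longlonglongrightarrow> 0"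
proof -
  define C where "C = norm (cc n / (2 * of_nat n + 1))"
  define c0 where "c0 = norm ((3 * of_nat (n+1) - a - 2) / 2 :: complex)"
  have C0: "C \<ge> 0" "c0 \<ge> 0" unfolding C_def c0_def by simp_all
  have ev: "\<forall>\<^sub>F k in sequentially. norm (G n (k+1)) \<le> C * (1 + c0) * 3/2 * inverse (real k)"
    using eventually_ge_at_top[of "M"]
  proof eventually_elim
    case (elim k)
    have k1: "real (k+1) \<ge> 1" "real k \<ge> 1" using elim M_ge2 by auto
    have hb: "norm (H n (k+1)) \<le> 3/2 / real (k+1) ^ 2" using elim by (intro H_bound) simp
    have gb: "norm (of_nat (k+1) + (3 * of_nat (n+1) - a - 2) / 2 :: complex) \<le> real (k+1) + c0"
      unfolding c0_def by (metis norm_of_nat norm_triangle_ineq)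
    have "norm (G n (k+1)) = C * norm (of_nat (k+1) + (3 * of_nat (n+1) - a - 2) / 2 :: complex) * norm (H n (k+1))"
      by (simp only: G_def C_def norm_mult)
    also have "\<dots> \<le> C * (real (k+1) + c0) * (3/2 / real (k+1) ^ 2)"
      using gb hb C0 by (intro mult_mono) auto
    also have "\<dots> \<le> C * (1 + c0) * 3/2 * inverse (real k)"
    proof -
      have "(real (k+1) + c0) / real (k+1) ^ 2 \<le> (1 + c0) / real (k+1)"
      proof -
        have "real (k+1) + c0 \<le> (1 + c0) * real (k+1)"
          using mult_nonneg_nonneg[of c0 "real k"] C0 by (simp add: algebra_simps)
        then have "(real (k+1) + c0) / real (k+1) ^ 2 \<le> (1 + c0) * real (k+1) / real (k+1) ^ 2"
          by (intro divide_right_mono) auto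
        also have "\<dots> = (1 + c0) / real (k+1)" by (simp add: power2_eq_square)
        finally show ?thesis .
      qed
      also have "\<dots> \<le> (1 + c0) / real k" using k1 C0 by (intro divide_left_mono) auto
      finally have "(real (k+1) + c0) / real (k+1) ^ 2 \<le> (1 + c0) / real k" .
      then have "C * ((real (k+1) + c0) / real (k+1) ^ 2) \<le> C * ((1 + c0) / real k)"
        using C0 by (intro mult_left_mono) auto
      then have "3/2 * (C * ((real (k+1) + c0) / real (k+1) ^ 2)) \<le> 3/2 * (C * ((1 + c0) / real k))"
        by (rule mult_left_mono) simp
      moreover have "C * (real (k+1) + c0) * (3/2 / real (k+1) ^ 2) = 3/2 * (C * ((real (k+1) + c0) / real (k+1) ^ 2))"
        by (simp add: field_simps)
      moreover have "C * (1 + c0) * 3/2 * inverse (real k) = 3/2 * (C * ((1 + c0) / real k))"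
        by (simp add: field_simps)
      ultimately show ?thesis by simp
    qed
    finally show ?case .
  qed
  have "(\<lambda>k. C * (1 + c0) * 3/2 * inverse (real k)) \<longlonglongrightarrow> 0"
    by (intro tendsto_mult_right_zero lim_inverse_n)
  with ev show ?thesis by (rule Lim_null_comparison)
qed

definition S :: "nat \<Rightarrow> complex" where "S n = (\<Sum>k. F n (k+1))"

lemma F_sums: "(\<lambda>k. F n (k+1)) sums S n"
  unfolding S_def by (rule summable_sums, rule summable_norm_cancel, rule F_summable)

lemma S_step: "S n = G n 1 + S (Suc n)"
proof -
  have t: "(\<lambda>k. G n (k+1) - G n (Suc (k+1))) sums (G n (0+1) - 0)"
    using telescope_sums'[OF G_lim[of n]] by simp
  have e: "(\<lambda>k. G n (k+1) - G n (Suc (k+1))) = (\<lambda>k. F n (k+1) - F (Suc n) (k+1))"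
    by (rule ext, rule tele[OF nzQ, symmetric]) simp_all
  have "(\<lambda>k. (F n (k+1) - F (Suc n) (k+1)) + F (Suc n) (k+1)) sums (G n 1 + S (Suc n))"
    using sums_add[OF t[unfolded e] F_sums[of "Suc n"]] by simp
  then have "(\<lambda>k. F n (k+1)) sums (G n 1 + S (Suc n))" by simp
  then show ?thesis using F_sums[of n] sums_unique2 by blast
qed

lemma S_sum: "S 0 = (\<Sum>n<N. G n 1) + S N"
proof (induction N)
  case (Suc N)
  then show ?case using S_step[of N] by (simp add: algebra_simps)
qed simp

lemma F_decay:
  assumes "N \<ge> M"
  shows "norm (F N k) \<le> (3/4)^(N-M) * norm (F M k)"
  using assms
proof (induction N rule: dec_induct)
  case base then show ?case by simp
next
  case (step N)
  have "norm (F (Suc N) k) \<le> 3/4 * norm (F N k)" using step(1) by (intro F_ratio) simp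
  also have "\<dots> \<le> 3/4 * ((3/4)^(N-M) * norm (F M k))" using step(3) by simp
  also have "\<dots> = (3/4)^(Suc N - M) * norm (F M k)" using step(1) by (simp add: Suc_diff_le)
  finally show ?case .
qed

lemma S_lim: "S \<longlonglongrightarrow> 0"
proof -
  define C where "C = (\<Sum>k. norm (F M (k+1)))"
  have ev: "\<forall>\<^sub>F N in sequentially. norm (S N) \<le> (3/4)^(N-M) * C"
    using eventually_ge_at_top[of M]
  proof eventually_elim
    case (elim N)
    have "norm (S N) \<le> (\<Sum>k. norm (F N (k+1)))"
      unfolding S_def by (rule summable_norm, rule F_summable)
    also have "\<dots> \<le> (\<Sum>k. (3/4)^(N-M) * norm (F M (k+1)))"
      by (intro suminf_le F_decay[OF elim] F_summable summable_mult)
    also have "\<dots> = (3/4)^(N-M) * C" unfolding C_def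
      by (rule suminf_mult, rule F_summable)
    finally show ?case .
  qed
  have "(\<lambda>N. (3/4::real)^(N+M-M) * C) \<longlonglongrightarrow> 0"
    by (simp, intro tendsto_mult_left_zero LIMSEQ_realpow_zero) auto
  then have "(\<lambda>N. (3/4::real)^(N-M) * C) \<longlonglongrightarrow> 0" by (rule LIMSEQ_offset)
  with ev show ?thesis by (rule Lim_null_comparison)
qed

lemma main_sums: "(\<lambda>n. G n 1) sums S 0"
proof -
  have "(\<lambda>N. S 0 - S N) \<longlonglongrightarrow> S 0 - 0" by (intro tendsto_diff tendsto_const S_lim)
  moreover have "(\<lambda>N. S 0 - S N) = (\<lambda>N. \<Sum>n<N. G n 1)" using S_sum by (auto simp: algebra_simps)
  ultimately show ?thesis unfolding sums_def by simp
qed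

lemma F0: "F 0 k = 1 / ((of_nat k)^2 - a * of_nat k - b^2)"
  unfolding F_def cc_def Pp_def H_def Q_def by simp

lemma G1: "G n 1 = (3 * of_nat (n+1) - a) / (of_nat (n+1) * of_nat ((2*(n+1)) choose (n+1)))
          * (\<Prod>j=1..n. (of_nat j)^2 - a^2 - 4 * b^2)
          / (\<Prod>j=1..n+1. (of_nat j)^2 - a * of_nat j - b^2)"
proof -
  have pr: "(\<Prod>i\<le>n. Q (1+i)) = (\<Prod>j=1..n+1. (of_nat j)^2 - a * of_nat j - b^2)"
  proof -
    have "(\<Prod>j=1..n+1. Q j) = (\<Prod>i=0..n. Q (Suc i))"
      using prod.shift_bounds_cl_Suc_ivl[of Q 0 n] by simp
    then show ?thesis unfolding Q_def by (simp add: atLeast0AtMost)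
  qed
  have B0: "(of_nat (n+1) * of_nat ((2*(n+1)) choose (n+1)) :: complex) = 2 * (2 * of_nat n+1) * of_nat ((2*n) choose n)"
  proof -
    have "(of_nat ((n+1) * ((2*(n+1)) choose (n+1))) :: complex) = of_nat (2 * (2*n+1) * ((2*n) choose n))"
      by (simp only: binom_step)
    then show ?thesis by (simp only: of_nat_mult of_nat_add of_nat_1 of_nat_numeral)
  qed
  define C where "C = (of_nat ((2*n) choose n) :: complex)"
  define C1 where "C1 = (of_nat ((2*(n+1)) choose (n+1)) :: complex)"
  define m where "m = (of_nat (n+1) :: complex)"
  define PP where "PP = (\<Prod>j=1..n+1. (of_nat j)^2 - a * of_nat j - b^2)"
  have nz: "C \<noteq> 0" "C1 \<noteq> 0" "m \<noteq> 0" unfolding C_def C1_def m_def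
    by (simp_all only: of_nat_eq_0_iff binomial_eq_0_iff) simp_all
  have nz2: "2 * of_nat n + 1 \<noteq> (0::complex)"
  proof
    assume "2 * of_nat n + 1 = (0::complex)"
    then have "(of_nat (2*n+1) :: complex) = 0" by (simp add: add.commute)
    then show False by (simp only: of_nat_eq_0_iff)
  qed
  have B: "m * C1 = 2 * (2 * of_nat n + 1) * C" using B0 unfolding C_def[symmetric] C1_def[symmetric] m_def[symmetric] .
  have mm: "3 * m - a = 2 * (1 + (3 * of_nat (n+1) - a - 2) / 2)" unfolding m_def by (simp add: field_simps)
  define X where "X = 1 + (3 * of_nat (n+1) - a - 2) / (2::complex)"
  define t where "t = 2 * of_nat n + (1::complex)"
  have "G n 1 = Pp n / C / t * X * (1 / PP)"
    unfolding G_def H_def cc_def C_def[symmetric] pr PP_def[symmetric] X_def t_def by simp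
  also have "\<dots> = (2 * X) / (2 * t * C) * Pp n / PP"
    using nz(1) nz2[folded t_def] by (simp add: field_simps)
  also have "\<dots> = (3 * m - a) / (m * C1) * Pp n / PP"
    unfolding B mm X_def[symmetric] t_def ..
  finally show ?thesis unfolding m_def C1_def PP_def Pp_def .
qed
end

theorem mainTheorem1:
  fixes a b :: complex
  assumes nz: "\<And>j::nat. j \<ge> 1 \<Longrightarrow> (of_nat j)^2 - a * of_nat j - b^2 \<noteq> 0"
  shows "summable (\<lambda>k::nat. 1 / ((of_nat (k+1))^2 - a * of_nat (k+1) - b^2))
    \<and> summable (\<lambda>k::nat. (3 * of_nat (k+1) - a) / (of_nat (k+1) * of_nat ((2*(k+1)) choose (k+1)))
          * (\<Prod>j=1..k. (of_nat j)^2 - a^2 - 4 * b^2)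
          / (\<Prod>j=1..k+1. (of_nat j)^2 - a * of_nat j - b^2))
    \<and> (\<Sum>k::nat. 1 / ((of_nat (k+1))^2 - a * of_nat (k+1) - b^2))
      = (\<Sum>k::nat. (3 * of_nat (k+1) - a) / (of_nat (k+1) * of_nat ((2*(k+1)) choose (k+1)))
          * (\<Prod>j=1..k. (of_nat j)^2 - a^2 - 4 * b^2)
          / (\<Prod>j=1..k+1. (of_nat j)^2 - a * of_nat j - b^2))"
proof -
  have s1: "(\<lambda>k::nat. 1 / ((of_nat (k+1))^2 - a * of_nat (k+1) - b^2)) sums S a b 0"
    proof -
    have f0: "\<And>k. F a b 0 k = 1 / ((of_nat k)^2 - a * of_nat k - b^2)" using nz by (rule F0)
    have "(\<lambda>k. F a b 0 (k+1)) sums S a b 0" using nz by (rule F_sums)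
    then show ?thesis unfolding f0 .
  qed
  have s2: "(\<lambda>k::nat. (3 * of_nat (k+1) - a) / (of_nat (k+1) * of_nat ((2*(k+1)) choose (k+1)))
          * (\<Prod>j=1..k. (of_nat j)^2 - a^2 - 4 * b^2)
          / (\<Prod>j=1..k+1. (of_nat j)^2 - a * of_nat j - b^2)) sums S a b 0"
    proof -
    have g1: "\<And>n. G a b n 1 = (3 * of_nat (n+1) - a) / (of_nat (n+1) * of_nat ((2*(n+1)) choose (n+1)))
          * (\<Prod>j=1..n. (of_nat j)^2 - a^2 - 4 * b^2)
          / (\<Prod>j=1..n+1. (of_nat j)^2 - a * of_nat j - b^2)" using nz by (rule G1)
    have "(\<lambda>n. G a b n 1) sums S a b 0" using nz by (rule main_sums)
    then show ?thesis unfolding g1 .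
  qed
  show ?thesis using s1 s2 by (simp add: sums_summable sums_unique[symmetric])
qed

end
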